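(* Let $f:\mathbb{R}^n\to\mathbb{R}$ be convex and continuously differentiable with $L_1$-Lipschitz gradient. Let the noisy objective be $\tilde f(x;\xi)=f(x)+\nu(x;\xi)$, where the noise is i.i.d. (across all evaluations and all $x$) with mean $0$ and variance $\sigma_a^2>0$. Consider the STARS iteration: given $x_k$, draw a standard Gaussian vector $u_k\in\mathbb{R}^n$ (mean $0$, covariance $I_n$), independent of everything else, and form $$s_{\mu_k}=\frac{\tilde f(x_k+\mu_k u_k;\xi_k)-\tilde f(x_k;\xi_{k-1})}{\mu_k}u_k,$$ where $\tilde f(x_k;\xi_{k-1})$ and $\tilde f(x_k+\mu_k u_k;\xi_k)$ are noisy evaluations with independent noise. If $\mu_k$ is set to the constant $$\mu^*=\left[\frac{8\sigma_a^2 n}{L_1^2(n+6)^3}\right]^{1/4},$$ then $$\mathbb{E}[\|s_{\mu_k}\|^2]\le 2(n+4)\|\nabla f(x_k)\|^2+C_2,\qquad C_2=2\sqrt{2}L_1\sigma_a\sqrt{n(n+6)^3},$$ where the expectation is over $u_k$ and the noise in the two evaluations, for the given $x_k$.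
   Context: $\|\cdot\|$ is the Euclidean norm. "$L_1$-Lipschitz gradient" means $\|\nabla f(x)-\nabla f(y)\|\le L_1\|x-y\|$ for all $x,y\in\mathbb{R}^n$. *)

theory Defs
  imports "HOL-Probability.Probability"
begin

definition std_gaussian :: "(real ^ 'n) measure" where
  "std_gaussian = density lborel
     (\<lambda>x. ennreal ((2 * pi) powr (- real CARD('n) / 2) * exp (- (norm x)\<^sup>2 / 2)))"

definition mu_star :: "real \<Rightarrow> real \<Rightarrow> nat \<Rightarrow> real" where
  "mu_star L1 \<sigma> n = (8 * \<sigma>\<^sup>2 * real n / (L1\<^sup>2 * (real n + 6) ^ 3)) powr (1/4)"

definition stars_step :: "(real ^ 'n \<Rightarrow> real) \<Rightarrow> real \<Rightarrow> real ^ 'n \<Rightarrow> real ^ 'n \<Rightarrow> real \<Rightarrow> real \<Rightarrow> real ^ 'n" where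
  "stars_step f \<mu> x u e1 e2 = (((f (x + \<mu> *\<^sub>R u) + e2) - (f x + e1)) / \<mu>) *\<^sub>R u"

end

theory Submission
  imports Defs
begin


lemma card_Basis_vec: "card (Basis :: (real ^ 'n) set) = CARD('n)"
  using DIM_cart[where 'a=real and 'b='n] by simp

lemma gauss_density_prod:
  fixes u :: "real ^ 'n"
  shows "(2 * pi) powr (- real CARD('n) / 2) * exp (- (norm u)\<^sup>2 / 2)
       = (\<Prod>b\<in>Basis. std_normal_density (u \<bullet> b))"
proof -
  have n2: "(norm u)\<^sup>2 = (\<Sum>b\<in>Basis. (u \<bullet> b)\<^sup>2)"
    by (subst power2_norm_eq_inner, subst euclidean_inner) (simp add: power2_eq_square)
  have "(\<Prod>b\<in>Basis. std_normal_density (u \<bullet> b))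
      = (\<Prod>b\<in>(Basis::(real^'n) set). 1 / sqrt (2 * pi)) * (\<Prod>b\<in>Basis. exp (- (u \<bullet> b)\<^sup>2 / 2))"
    by (simp only: std_normal_density_def prod.distrib)
  also have "(\<Prod>b\<in>(Basis::(real^'n) set). 1 / sqrt (2 * pi)) = (2 * pi) powr (- real CARD('n) / 2)"
  proof -
    have "(\<Prod>b\<in>(Basis::(real^'n) set). 1 / sqrt (2 * pi)) = (1 / sqrt (2*pi)) ^ CARD('n)"
      by (simp add: card_Basis_vec)
    also have "\<dots> = ((2*pi) powr (-1/2)) ^ CARD('n)"
      by (simp add: powr_minus_divide powr_half_sqrt[symmetric] )
    also have "\<dots> = (2 * pi) powr (- real CARD('n) / 2)"
      by (simp add: powr_realpow[symmetric] powr_powr)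
    finally show ?thesis .
  qed
  also have "(\<Prod>b\<in>(Basis::(real^'n) set). exp (- (u \<bullet> b)\<^sup>2 / 2)) = exp (- (norm u)\<^sup>2 / 2)"
    by (simp add: exp_sum[symmetric] n2 sum_negf sum_divide_distrib)
  finally show ?thesis by simp
qed

lemma std_gaussian_eq:
  "std_gaussian = density lborel (\<lambda>u::real^'n. ennreal (\<Prod>b\<in>Basis. std_normal_density (u \<bullet> b)))"
  unfolding std_gaussian_def gauss_density_prod ..

lemma gauss_prod:
  fixes h :: "real ^ 'n \<Rightarrow> real \<Rightarrow> real"
  assumes h_int: "\<And>b. b \<in> Basis \<Longrightarrow> integrable lborel (\<lambda>y. std_normal_density y * h b y)"
    and h_meas[measurable]: "\<And>b. h b \<in> borel_measurable borel"
  shows "integrable std_gaussian (\<lambda>u. \<Prod>b\<in>Basis. h b (u \<bullet> b))"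
    and "(\<integral>u. (\<Prod>b\<in>Basis. h b (u \<bullet> b)) \<partial>std_gaussian) = (\<Prod>b\<in>Basis. \<integral>y. std_normal_density y * h b y \<partial>lborel)"
proof -
  interpret P: product_sigma_finite "\<lambda>_::real^'n. lborel :: real measure" by standard
  define T where "T = (\<lambda>f. \<Sum>b\<in>(Basis::(real^'n) set). f b *\<^sub>R b)"
  define \<rho> where "\<rho> = (\<lambda>u::real^'n. \<Prod>b\<in>Basis. std_normal_density (u \<bullet> b))"
  define F where "F = (\<lambda>u::real^'n. \<Prod>b\<in>Basis. h b (u \<bullet> b))"
  have [measurable]: "\<rho> \<in> borel_measurable borel" unfolding \<rho>_def by measurable
  have [measurable]: "F \<in> borel_measurable borel" unfolding F_def by measurable
  have [measurable]: "T \<in> measurable (\<Pi>\<^sub>M b\<in>Basis. lborel) borel" unfolding T_def by measurable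
  have L: "(lborel :: (real^'n) measure) = distr (\<Pi>\<^sub>M b\<in>Basis. lborel) borel T"
    unfolding T_def by (rule lborel_eq)
  have TB: "T f \<bullet> b = f b" if "b \<in> Basis" for f b using that unfolding T_def by simp
  have eqf: "(\<lambda>f. \<rho> (T f) * F (T f)) = (\<lambda>f. \<Prod>b\<in>Basis. std_normal_density (f b) * h b (f b))"
    by (auto simp: \<rho>_def F_def TB prod.distrib intro!: prod.cong ext)
  have G: "std_gaussian = density lborel \<rho>" unfolding std_gaussian_eq \<rho>_def ..
  have nn: "AE x in lborel. 0 \<le> \<rho> x" by (auto simp: \<rho>_def intro!: prod_nonneg)
  have "integrable (\<Pi>\<^sub>M b\<in>Basis. lborel) (\<lambda>f. \<Prod>b\<in>Basis. std_normal_density (f b) * h b (f b))"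
    by (rule P.product_integrable_prod) (auto intro: h_int)
  then show "integrable std_gaussian F"
    unfolding G by (subst integrable_density) (auto simp: nn, subst L, subst integrable_distr_eq, auto simp: eqf)
  have "(\<integral>u. F u \<partial>std_gaussian) = (\<integral>u. \<rho> u *\<^sub>R F u \<partial>lborel)"
    unfolding G by (rule integral_density) (auto simp: nn)
  also have "\<dots> = (\<integral>f. \<rho> (T f) * F (T f) \<partial>(\<Pi>\<^sub>M b\<in>Basis. lborel))"
    by (subst L, subst integral_distr) auto
  also have "\<dots> = (\<Prod>b\<in>Basis. \<integral>y. std_normal_density y * h b y \<partial>lborel)"
    unfolding eqf by (rule P.product_integral_prod) (auto intro: h_int)
  finally show "(\<integral>u. F u \<partial>std_gaussian) = (\<Prod>b\<in>Basis. \<integral>y. std_normal_density y * h b y \<partial>lborel)" .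
qed

definition mom :: "nat \<Rightarrow> real" where
  "mom k = (\<integral>y. std_normal_density y * y ^ k \<partial>lborel)"

lemma mom_even: "mom (2*k) = fact (2 * k) / (2^k * fact k)"
  unfolding mom_def by (rule integral_std_normal_moment_even)
lemma mom_odd: "mom (2*k+1) = 0"
  unfolding mom_def by (rule integral_std_normal_moment_odd)
lemma mom_vals: "mom 0 = 1" "mom 1 = 0" "mom 2 = 1" "mom 3 = 0" "mom 4 = 3" "mom 6 = 15"
  using mom_even[of 0] mom_odd[of 0] mom_even[of 1] mom_odd[of 1] mom_even[of 2] mom_even[of 3]
  by (simp_all add: fact_numeral)

lemma mom_vals_Suc: "mom (Suc 0) = 0" "mom (Suc (Suc 0)) = 1" "mom (Suc (Suc (Suc 0))) = 0"
  "mom (Suc (Suc (Suc (Suc 0)))) = 3" "mom (Suc (Suc (Suc (Suc (Suc (Suc 0)))))) = 15"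
  using mom_vals by (simp_all add: numeral_eq_Suc)

lemma pow_if: "x ^ (if P then k else 0) = (if P then x ^ k else 1)" for x :: real
  by simp

lemma gauss_mono3:
  fixes a b c :: "real ^ 'n" and i j k :: nat
  assumes "a \<in> Basis" "b \<in> Basis" "c \<in> Basis"
  defines "e \<equiv> (\<lambda>d. (if d = a then i else 0) + (if d = b then j else 0) + (if d = c then k else 0))"
  shows "integrable std_gaussian (\<lambda>u. (u \<bullet> a) ^ i * (u \<bullet> b) ^ j * (u \<bullet> c) ^ k)"
    and "(\<integral>u. (u \<bullet> a) ^ i * (u \<bullet> b) ^ j * (u \<bullet> c) ^ k \<partial>std_gaussian) = (\<Prod>d\<in>{a,b,c}. mom (e d))"
proof -
  have eq: "(u \<bullet> a) ^ i * (u \<bullet> b) ^ j * (u \<bullet> c) ^ k = (\<Prod>d\<in>Basis. (u \<bullet> d) ^ e d)" for u :: "real^'n"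
    unfolding e_def power_add prod.distrib pow_if using assms by (simp add: prod.delta)
  have hi: "integrable lborel (\<lambda>y. std_normal_density y * y ^ e d)" for d
    by (rule integrable_std_normal_moment)
  show "integrable std_gaussian (\<lambda>u. (u \<bullet> a) ^ i * (u \<bullet> b) ^ j * (u \<bullet> c) ^ k)"
    unfolding eq by (rule gauss_prod(1)[where h="\<lambda>d y. y ^ e d"]) (auto intro: hi)
  have "(\<integral>u. (u \<bullet> a) ^ i * (u \<bullet> b) ^ j * (u \<bullet> c) ^ k \<partial>std_gaussian) = (\<Prod>d\<in>Basis. mom (e d))"
    unfolding eq mom_def by (rule gauss_prod(2)[where h="\<lambda>d y. y ^ e d"]) (auto intro: hi)
  also have "\<dots> = (\<Prod>d\<in>{a,b,c}. mom (e d))"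
    using assms by (intro prod.mono_neutral_right) (auto simp: e_def mom_vals)
  finally show "(\<integral>u. (u \<bullet> a) ^ i * (u \<bullet> b) ^ j * (u \<bullet> c) ^ k \<partial>std_gaussian) = (\<Prod>d\<in>{a,b,c}. mom (e d))" .
qed

lemma gauss_112:
  fixes a b c :: "real ^ 'n"
  assumes "a \<in> Basis" "b \<in> Basis" "c \<in> Basis"
  shows "integrable std_gaussian (\<lambda>u. (u \<bullet> a) * (u \<bullet> b) * (u \<bullet> c) ^ 2)"
    and "(\<integral>u. (u \<bullet> a) * (u \<bullet> b) * (u \<bullet> c) ^ 2 \<partial>std_gaussian) = (if a = b then (if a = c then 3 else 1) else 0)"
  using gauss_mono3[OF assms, of 1 1 2]
  by (auto simp: mom_vals mom_vals_Suc insert_commute)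

lemma gauss_222:
  fixes a b c :: "real ^ 'n"
  assumes "a \<in> Basis" "b \<in> Basis" "c \<in> Basis"
  shows "integrable std_gaussian (\<lambda>u. (u \<bullet> a)^2 * (u \<bullet> b)^2 * (u \<bullet> c) ^ 2)"
    and "(\<integral>u. (u \<bullet> a)^2 * (u \<bullet> b)^2 * (u \<bullet> c) ^ 2 \<partial>std_gaussian) =
       1 + (if a = b then 2 else 0) + (if b = c then 2 else 0) + (if a = c then 2 else 0) + (if a = b \<and> b = c then 8 else 0)"
  using gauss_mono3[OF assms, of 2 2 2]
  by (auto simp: mom_vals mom_vals_Suc insert_commute)

lemma integral_sum3:
  fixes F :: "'i \<Rightarrow> 'j \<Rightarrow> 'k \<Rightarrow> 'a \<Rightarrow> real"
  assumes I: "\<And>a b c. a \<in> A \<Longrightarrow> b \<in> B \<Longrightarrow> c \<in> C \<Longrightarrow> integrable M (F a b c)"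
  shows "integrable M (\<lambda>x. \<Sum>a\<in>A. \<Sum>b\<in>B. \<Sum>c\<in>C. F a b c x)"
    and "(\<integral>x. (\<Sum>a\<in>A. \<Sum>b\<in>B. \<Sum>c\<in>C. F a b c x) \<partial>M) = (\<Sum>a\<in>A. \<Sum>b\<in>B. \<Sum>c\<in>C. integral\<^sup>L M (F a b c))"
proof -
  have I2: "integrable M (\<lambda>x. \<Sum>c\<in>C. F a b c x)" if "a \<in> A" "b \<in> B" for a b
    using I that by auto
  have I1: "integrable M (\<lambda>x. \<Sum>b\<in>B. \<Sum>c\<in>C. F a b c x)" if "a \<in> A" for a
    using I2 that by auto
  show "integrable M (\<lambda>x. \<Sum>a\<in>A. \<Sum>b\<in>B. \<Sum>c\<in>C. F a b c x)"
    using I1 by auto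
  have "(\<integral>x. (\<Sum>a\<in>A. \<Sum>b\<in>B. \<Sum>c\<in>C. F a b c x) \<partial>M) = (\<Sum>a\<in>A. \<integral>x. (\<Sum>b\<in>B. \<Sum>c\<in>C. F a b c x) \<partial>M)"
    using I1 by simp
  also have "\<dots> = (\<Sum>a\<in>A. \<Sum>b\<in>B. \<integral>x. (\<Sum>c\<in>C. F a b c x) \<partial>M)"
    using I2 by simp
  also have "\<dots> = (\<Sum>a\<in>A. \<Sum>b\<in>B. \<Sum>c\<in>C. integral\<^sup>L M (F a b c))"
    using I by simp
  finally show "(\<integral>x. (\<Sum>a\<in>A. \<Sum>b\<in>B. \<Sum>c\<in>C. F a b c x) \<partial>M) = (\<Sum>a\<in>A. \<Sum>b\<in>B. \<Sum>c\<in>C. integral\<^sup>L M (F a b c))" .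
qed

lemma norm2_sum: "(norm u)\<^sup>2 = (\<Sum>c\<in>Basis. (u \<bullet> c)\<^sup>2)" for u :: "real^'n"
  by (subst power2_norm_eq_inner, subst euclidean_inner) (simp add: power2_eq_square)

lemma gauss_norm2:
  shows "integrable std_gaussian (\<lambda>u::real^'n. (norm u)\<^sup>2)"
    and "(\<integral>u. (norm u)\<^sup>2 \<partial>(std_gaussian :: (real^'n) measure)) = real CARD('n)"
proof -
  have I: "integrable std_gaussian (\<lambda>u::real^'n. (u \<bullet> c)\<^sup>2)" if "c \<in> Basis" for c
    using gauss_mono3(1)[OF that that that, of 0 0 2] by simp
  have V: "(\<integral>u. (u \<bullet> c)\<^sup>2 \<partial>(std_gaussian :: (real^'n) measure)) = 1" if "c \<in> Basis" for c :: "real^'n"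
    using gauss_mono3(2)[OF that that that, of 0 0 2] by (simp add: mom_vals mom_vals_Suc)
  show "integrable std_gaussian (\<lambda>u::real^'n. (norm u)\<^sup>2)"
    unfolding norm2_sum by (auto intro!: integrable_sum I)
  show "(\<integral>u. (norm u)\<^sup>2 \<partial>(std_gaussian :: (real^'n) measure)) = real CARD('n)"
    unfolding norm2_sum by (simp add: I V card_Basis_vec)
qed


lemma gauss_grad:
  fixes g :: "real^'n"
  shows "integrable std_gaussian (\<lambda>u::real^'n. (g \<bullet> u)\<^sup>2 * (norm u)\<^sup>2)"
    and "(\<integral>u. (g \<bullet> u)\<^sup>2 * (norm u)\<^sup>2 \<partial>(std_gaussian :: (real^'n) measure)) = (real CARD('n) + 2) * (norm g)\<^sup>2"
proof -
  have e: "(g \<bullet> u)\<^sup>2 * (norm u)\<^sup>2 = (\<Sum>a\<in>Basis. \<Sum>b\<in>Basis. \<Sum>c\<in>Basis. (g \<bullet> a) * (g \<bullet> b) * ((u \<bullet> a) * (u \<bullet> b) * (u \<bullet> c)\<^sup>2))" for u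
    unfolding norm2_sum euclidean_inner[of g u] power2_eq_square[of "sum _ _"]
    by (simp add: sum_product sum_distrib_left sum_distrib_right mult_ac)
  have I: "integrable std_gaussian (\<lambda>u::real^'n. (g \<bullet> a) * (g \<bullet> b) * ((u \<bullet> a) * (u \<bullet> b) * (u \<bullet> c)\<^sup>2))"
    if "a \<in> Basis" "b \<in> Basis" "c \<in> Basis" for a b c
    using gauss_112(1)[OF that] by simp
  show "integrable std_gaussian (\<lambda>u::real^'n. (g \<bullet> u)\<^sup>2 * (norm u)\<^sup>2)"
    unfolding e by (rule integral_sum3(1)[OF I])
  have S: "(\<Sum>c\<in>(Basis::(real^'n) set). if a = c then 3 else 1) = real CARD('n) + 2" if "a \<in> Basis" for a :: "real^'n"
  proof -
    have "(\<Sum>c\<in>(Basis::(real^'n) set). if a = c then 3 else 1) = (\<Sum>c\<in>(Basis::(real^'n) set). 1 + (if a = c then 2 else 0::real))"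
      by (rule sum.cong) auto
    then show ?thesis using that by (simp add: sum.distrib card_Basis_vec)
  qed
  have "(\<integral>u. (g \<bullet> u)\<^sup>2 * (norm u)\<^sup>2 \<partial>(std_gaussian :: (real^'n) measure))
     = (\<Sum>a\<in>Basis. \<Sum>b\<in>Basis. \<Sum>c\<in>Basis. (g \<bullet> a) * (g \<bullet> b) * (if a = b then (if a = c then 3 else 1) else 0))"
    unfolding e
    by (subst integral_sum3(2)[OF I], assumption+) (simp add: gauss_112(2))
  also have "\<dots> = (\<Sum>a\<in>Basis. (g \<bullet> a)\<^sup>2 * (real CARD('n) + 2))"
  proof (rule sum.cong[OF refl])
    fix a :: "real^'n" assume a: "a \<in> Basis"
    have "(\<Sum>b\<in>Basis. \<Sum>c\<in>Basis. (g \<bullet> a) * (g \<bullet> b) * (if a = b then (if a = c then 3 else 1) else 0))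
        = (\<Sum>b\<in>Basis. if a = b then (g \<bullet> a) * (g \<bullet> a) * (\<Sum>c\<in>(Basis::(real^'n) set). if a = c then 3 else 1) else 0)"
      by (rule sum.cong) (auto simp: sum_distrib_left)
    also have "\<dots> = (g \<bullet> a)\<^sup>2 * (real CARD('n) + 2)"
      using a by (simp add: S power2_eq_square)
    finally show "(\<Sum>b\<in>Basis. \<Sum>c\<in>Basis. (g \<bullet> a) * (g \<bullet> b) * (if a = b then (if a = c then 3 else 1) else 0))
        = (g \<bullet> a)\<^sup>2 * (real CARD('n) + 2)" .
  qed
  also have "\<dots> = (real CARD('n) + 2) * (norm g)\<^sup>2"
    by (simp add: norm2_sum[of g] sum_distrib_left sum_distrib_right mult_ac)
  finally show "(\<integral>u. (g \<bullet> u)\<^sup>2 * (norm u)\<^sup>2 \<partial>(std_gaussian :: (real^'n) measure)) = (real CARD('n) + 2) * (norm g)\<^sup>2" .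
qed


lemma gauss_norm6:
  shows "integrable std_gaussian (\<lambda>u::real^'n. (norm u) ^ 6)"
    and "(\<integral>u. (norm u) ^ 6 \<partial>(std_gaussian :: (real^'n) measure)) = real CARD('n) * (real CARD('n) + 2) * (real CARD('n) + 4)"
proof -
  define N where "N = real CARD('n)"
  have e: "(norm u) ^ 6 = (\<Sum>a\<in>Basis. \<Sum>b\<in>Basis. \<Sum>c\<in>Basis. (u \<bullet> a)^2 * (u \<bullet> b)^2 * (u \<bullet> c)^2)" for u :: "real^'n"
  proof -
    have "(norm u) ^ 6 = ((norm u)\<^sup>2) * ((norm u)\<^sup>2) * ((norm u)\<^sup>2)" by algebra
    then show ?thesis unfolding norm2_sum[of u]
      by (simp add: sum_product sum_distrib_left sum_distrib_right mult_ac)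
  qed
  have I: "integrable std_gaussian (\<lambda>u::real^'n. (u \<bullet> a)^2 * (u \<bullet> b)^2 * (u \<bullet> c)^2)"
    if "a \<in> Basis" "b \<in> Basis" "c \<in> Basis" for a b c
    using gauss_222(1)[OF that] by simp
  show "integrable std_gaussian (\<lambda>u::real^'n. (norm u) ^ 6)"
    unfolding e by (rule integral_sum3(1)[OF I])
  have S1: "(\<Sum>c\<in>(Basis::(real^'n) set). 1 + (if a = b then 2 else 0) + (if b = c then 2 else 0) + (if a = c then 2 else 0) + (if a = b \<and> b = c then 8 else 0::real))
      = N + 4 + (if a = b then 2 * N + 8 else 0)" if "a \<in> Basis" "b \<in> Basis" for a b :: "real^'n"
  proof -
    have "(\<Sum>c\<in>(Basis::(real^'n) set). 1 + (if a = b then 2 else 0) + (if b = c then 2 else 0) + (if a = c then 2 else 0) + (if a = b \<and> b = c then 8 else 0::real))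
      = (\<Sum>c\<in>(Basis::(real^'n) set). 1 + (if a = b then 2 else 0)) + (\<Sum>c\<in>(Basis::(real^'n) set). if b = c then 2 else 0)
        + (\<Sum>c\<in>(Basis::(real^'n) set). if a = c then 2 else 0) + (\<Sum>c\<in>(Basis::(real^'n) set). if a = b \<and> b = c then 8 else 0)"
      by (simp add: sum.distrib)
    also have "\<dots> = N * (1 + (if a = b then 2 else 0)) + 2 + 2 + (if a = b then 8 else 0)"
      using that by (auto simp: N_def card_Basis_vec)
    finally show ?thesis by simp
  qed
  have "(\<integral>u. (norm u) ^ 6 \<partial>(std_gaussian :: (real^'n) measure))
     = (\<Sum>a\<in>(Basis::(real^'n) set). \<Sum>b\<in>(Basis::(real^'n) set). \<Sum>c\<in>(Basis::(real^'n) set). 1 + (if a = b then 2 else 0) + (if b = c then 2 else 0) + (if a = c then 2 else 0) + (if a = b \<and> b = c then 8 else 0::real))"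
    unfolding e
    by (subst integral_sum3(2)[OF I], assumption+) (simp add: gauss_222(2))
  also have "\<dots> = (\<Sum>a\<in>(Basis::(real^'n) set). \<Sum>b\<in>(Basis::(real^'n) set). N + 4 + (if a = b then 2 * N + 8 else 0))"
    by (intro sum.cong refl S1)
  also have "\<dots> = (\<Sum>a\<in>(Basis::(real^'n) set). N * (N + 4) + (2 * N + 8))"
    by (rule sum.cong[OF refl]) (simp add: sum.distrib N_def card_Basis_vec)
  also have "\<dots> = N * (N + 2) * (N + 4)"
    by (simp add: N_def card_Basis_vec algebra_simps)
  finally show "(\<integral>u. (norm u) ^ 6 \<partial>(std_gaussian :: (real^'n) measure)) = real CARD('n) * (real CARD('n) + 2) * (real CARD('n) + 4)"
    unfolding N_def .
qed



lemma taylor_bound: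
  fixes f :: "'a::real_inner \<Rightarrow> real" and grad :: "'a \<Rightarrow> 'a"
  assumes grad: "\<And>y. GDERIV f y :> grad y"
    and lip: "\<And>y z. norm (grad y - grad z) \<le> L * norm (y - z)"
  shows "\<bar>f (x + v) - f x - grad x \<bullet> v\<bar> \<le> L / 2 * (norm v)\<^sup>2"
proof -
  have D: "((\<lambda>t. f (x + t *\<^sub>R v)) has_real_derivative (grad (x + t *\<^sub>R v) \<bullet> v)) (at t)" for t
  proof -
    have d1: "((\<lambda>t. x + t *\<^sub>R v) has_derivative (\<lambda>h. h *\<^sub>R v)) (at t)"
      by (auto intro!: derivative_eq_intros)
    have d2: "(f has_derivative (\<lambda>h. h \<bullet> grad (x + t *\<^sub>R v))) (at (x + t *\<^sub>R v))"
      using grad[of "x + t *\<^sub>R v"] unfolding gderiv_def .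
    show ?thesis unfolding has_field_derivative_def
      by (rule has_derivative_eq_rhs[OF has_derivative_compose[OF d1 d2]]) (auto simp: fun_eq_iff inner_commute)
  qed
  define c where "c = L * (norm v)\<^sup>2"
  have bnd: "\<bar>grad (x + t *\<^sub>R v) \<bullet> v - grad x \<bullet> v\<bar> \<le> c * t" if "0 \<le> t" for t
  proof -
    have "\<bar>grad (x + t *\<^sub>R v) \<bullet> v - grad x \<bullet> v\<bar> = \<bar>(grad (x + t *\<^sub>R v) - grad x) \<bullet> v\<bar>"
      by (simp add: inner_diff_left)
    also have "\<dots> \<le> norm (grad (x + t *\<^sub>R v) - grad x) * norm v"
      by (rule Cauchy_Schwarz_ineq2)
    also have "\<dots> \<le> (L * norm (t *\<^sub>R v)) * norm v"
      using lip[of "x + t *\<^sub>R v" x] by (intro mult_right_mono) auto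
    also have "\<dots> = c * t" using that by (simp add: c_def power2_eq_square)
    finally show ?thesis .
  qed
  define \<phi> where "\<phi> = (\<lambda>t. f (x + t *\<^sub>R v) - t * (grad x \<bullet> v))"
  have D\<phi>: "(\<phi> has_real_derivative (grad (x + t *\<^sub>R v) \<bullet> v - grad x \<bullet> v)) (at t)" for t
    unfolding \<phi>_def by (auto intro!: derivative_eq_intros D)
  have up: "(\<lambda>t. \<phi> t - c / 2 * t\<^sup>2) 1 \<le> (\<lambda>t. \<phi> t - c / 2 * t\<^sup>2) 0"
  proof (rule DERIV_nonpos_imp_nonincreasing[of 0 1])
    fix t :: real assume t: "0 \<le> t" "t \<le> 1"
    show "\<exists>y. ((\<lambda>t. \<phi> t - c / 2 * t\<^sup>2) has_real_derivative y) (at t) \<and> y \<le> 0"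
      using bnd[OF t(1)]
      by (intro exI[of _ "grad (x + t *\<^sub>R v) \<bullet> v - grad x \<bullet> v - c * t"] conjI)
         (auto intro!: derivative_eq_intros D\<phi>)
  qed simp
  have lo: "(\<lambda>t. \<phi> t + c / 2 * t\<^sup>2) 0 \<le> (\<lambda>t. \<phi> t + c / 2 * t\<^sup>2) 1"
  proof (rule DERIV_nonneg_imp_nondecreasing[of 0 1])
    fix t :: real assume t: "0 \<le> t" "t \<le> 1"
    show "\<exists>y. ((\<lambda>t. \<phi> t + c / 2 * t\<^sup>2) has_real_derivative y) (at t) \<and> y \<ge> 0"
      using bnd[OF t(1)]
      by (intro exI[of _ "grad (x + t *\<^sub>R v) \<bullet> v - grad x \<bullet> v + c * t"] conjI)
         (auto intro!: derivative_eq_intros D\<phi>)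
  qed simp
  show ?thesis using up lo unfolding abs_le_iff by (simp add: \<phi>_def c_def)
qed



lemma noise_sq:
  fixes N :: "real measure"
  assumes P: "prob_space N" and S: "sets N = sets borel"
    and I2: "integrable N (\<lambda>e. e\<^sup>2)" and m: "(\<integral>e. e \<partial>N) = 0" and v: "(\<integral>e. e\<^sup>2 \<partial>N) = \<sigma>\<^sup>2"
  shows "integrable N (\<lambda>e. (b + e)\<^sup>2)" and "(\<integral>e. (b + e)\<^sup>2 \<partial>N) = b\<^sup>2 + \<sigma>\<^sup>2"
proof -
  interpret prob_space N by (rule P)
  have meas[measurable]: "(\<lambda>e::real. e) \<in> borel_measurable N"
    by (subst measurable_cong_sets[OF S refl]) simp
  have I1: "integrable N (\<lambda>e. e)"
    by (rule square_integrable_imp_integrable[OF meas I2])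
  have eq: "(\<lambda>e. (b + e)\<^sup>2) = (\<lambda>e. b\<^sup>2 + (2 * b * e + e\<^sup>2))" by (auto simp: power2_eq_square algebra_simps)
  show "integrable N (\<lambda>e. (b + e)\<^sup>2)" unfolding eq using I1 I2 by auto
  show "(\<integral>e. (b + e)\<^sup>2 \<partial>N) = b\<^sup>2 + \<sigma>\<^sup>2" unfolding eq
    using I1 I2 m v by (simp add: prob_space)
qed

lemma noise_pair:
  fixes N :: "real measure"
  assumes P: "prob_space N" and S: "sets N = sets borel"
    and I2: "integrable N (\<lambda>e. e\<^sup>2)" and m: "(\<integral>e. e \<partial>N) = 0" and v: "(\<integral>e. e\<^sup>2 \<partial>N) = \<sigma>\<^sup>2"
    and c: "0 \<le> c"
  shows "(\<integral>\<^sup>+ (e1, e2). ennreal (c * (a + e2 - e1)\<^sup>2) \<partial>(N \<Otimes>\<^sub>M N)) = ennreal (c * (a\<^sup>2 + 2 * \<sigma>\<^sup>2))"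
proof -
  interpret prob_space N by (rule P)
  note sq = noise_sq[OF P S I2 m v]
  have [measurable]: "(\<lambda>(e1, e2). ennreal (c * (a + e2 - e1)\<^sup>2)) \<in> borel_measurable (N \<Otimes>\<^sub>M N)"
    by (subst measurable_cong_sets[OF sets_pair_measure_cong[OF S S] refl]) measurable
  have "(\<integral>\<^sup>+ (e1, e2). ennreal (c * (a + e2 - e1)\<^sup>2) \<partial>(N \<Otimes>\<^sub>M N))
     = (\<integral>\<^sup>+ e1. \<integral>\<^sup>+ e2. ennreal (c * (a + e2 - e1)\<^sup>2) \<partial>N \<partial>N)"
    by (subst nn_integral_fst[symmetric]) auto
  also have "\<dots> = (\<integral>\<^sup>+ e1. ennreal (c * ((a - e1)\<^sup>2 + \<sigma>\<^sup>2)) \<partial>N)"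
  proof (rule nn_integral_cong)
    fix e1
    have "(\<integral>\<^sup>+ e2. ennreal (c * (a + e2 - e1)\<^sup>2) \<partial>N) = (\<integral>\<^sup>+ e2. ennreal (c * ((a - e1) + e2)\<^sup>2) \<partial>N)"
      by (simp add: algebra_simps)
    also have "\<dots> = ennreal (\<integral>e2. c * ((a - e1) + e2)\<^sup>2 \<partial>N)"
      using sq(1)[of "a - e1"] c by (intro nn_integral_eq_integral) auto
    also have "\<dots> = ennreal (c * ((a - e1)\<^sup>2 + \<sigma>\<^sup>2))"
      using sq(2)[of "a - e1"] by simp
    finally show "(\<integral>\<^sup>+ e2. ennreal (c * (a + e2 - e1)\<^sup>2) \<partial>N) = ennreal (c * ((a - e1)\<^sup>2 + \<sigma>\<^sup>2))" .
  qed
  also have "\<dots> = (\<integral>\<^sup>+ e1. ennreal (c * ((- a + e1)\<^sup>2 + \<sigma>\<^sup>2)) \<partial>N)"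
    by (intro nn_integral_cong) (simp add: power2_commute)
  also have "\<dots> = ennreal (\<integral>e1. c * ((- a + e1)\<^sup>2 + \<sigma>\<^sup>2) \<partial>N)"
    using sq(1)[of "-a"] c by (intro nn_integral_eq_integral) auto
  also have "\<dots> = ennreal (c * (a\<^sup>2 + 2 * \<sigma>\<^sup>2))"
    using sq[of "-a"] by (simp add: prob_space add.commute)
  finally show ?thesis .
qed



lemma final_arith:
  fixes n L1 \<sigma> G :: real
  assumes n: "n \<ge> 1" and L: "L1 > 0" and s: "\<sigma> > 0" and G: "G \<ge> 0"
    and mu: "\<mu> = (8 * \<sigma>\<^sup>2 * n / (L1\<^sup>2 * (n + 6) ^ 3)) powr (1/4)"
  shows "2 * ((n + 2) * G) + L1\<^sup>2 * \<mu>\<^sup>2 / 2 * (n * (n + 2) * (n + 4)) + 2 * \<sigma>\<^sup>2 / \<mu>\<^sup>2 * n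
     \<le> 2 * (n + 4) * G + 2 * sqrt 2 * L1 * \<sigma> * sqrt (n * (n + 6) ^ 3)"
proof -
  define q where "q = 8 * \<sigma>\<^sup>2 * n / (L1\<^sup>2 * (n + 6) ^ 3)"
  have q: "q > 0" unfolding q_def using n L s by (intro divide_pos_pos mult_pos_pos) auto
  have mu2: "\<mu>\<^sup>2 = sqrt q"
  proof -
    have "\<mu>\<^sup>2 = q powr (1/4) * q powr (1/4)" unfolding mu q_def[symmetric] by (simp add: power2_eq_square)
    also have "\<dots> = q powr (1/2)" by (simp add: powr_add[symmetric])
    also have "\<dots> = sqrt q" using q by (simp add: powr_half_sqrt)
    finally show ?thesis .
  qed
  define m where "m = \<mu>\<^sup>2"
  have m: "m > 0" "m\<^sup>2 = q" unfolding m_def mu2 using q by auto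
  define K where "K = L1 * \<sigma> * sqrt (n * (n + 6) ^ 3)"
  have K: "K > 0" unfolding K_def using n L s by auto
  have K2: "K\<^sup>2 = L1\<^sup>2 * \<sigma>\<^sup>2 * (n * (n + 6) ^ 3)"
    unfolding K_def using n by (simp add: power_mult_distrib)
  define X where "X = L1\<^sup>2 * m * (n + 6) ^ 3 / 2"
  define Y where "Y = 2 * \<sigma>\<^sup>2 / m * n"
  have X0: "X \<ge> 0" unfolding X_def using m n by auto
  have X2: "X\<^sup>2 = 2 * K\<^sup>2"
  proof -
    have "X\<^sup>2 = L1^4 * m\<^sup>2 * (n + 6) ^ 6 / 4" unfolding X_def by (simp add: power_mult_distrib power_divide flip: power_mult)
    also have "\<dots> = 2 * (L1\<^sup>2 * \<sigma>\<^sup>2 * (n * (n + 6) ^ 3))"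
    proof -
      have h: "B\<^sup>2 * (8 * S * n / (B * A)) * A\<^sup>2 / 4 = 2 * (B * S * (n * A))" if "A > 0" "B > 0" for A B S :: real
        using that by (simp add: field_simps power2_eq_square)
      have e1: "L1 ^ 4 = (L1\<^sup>2)\<^sup>2" "(n + 6) ^ 6 = ((n + 6) ^ 3)\<^sup>2" by (simp_all flip: power_mult)
      show ?thesis unfolding m q_def e1 using h[of "(n+6)^3" "L1\<^sup>2" "\<sigma>\<^sup>2"] L n by simp
    qed
    finally show ?thesis by (simp add: K2)
  qed
  have XY: "X * Y = K\<^sup>2" unfolding X_def Y_def K2 using m by (simp add: field_simps)
  have Xv: "X = sqrt 2 * K"
  proof -
    have "X = sqrt (X\<^sup>2)" using X0 by simp
    also have "\<dots> = sqrt 2 * K" unfolding X2 using K by (simp add: real_sqrt_mult)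
    finally show ?thesis .
  qed
  have Yv: "Y = K / sqrt 2"
    using XY K unfolding Xv by (simp add: field_simps power2_eq_square)
  have XYb: "X + Y \<le> 2 * sqrt 2 * K"
  proof -
    have "K / sqrt 2 \<le> sqrt 2 * K" using K by (simp add: field_simps)
    then show ?thesis unfolding Xv Yv by (simp add: mult.commute)
  qed
  have P: "n * (n + 2) * (n + 4) \<le> (n + 6) ^ 3" using n by (simp add: eval_nat_numeral algebra_simps)
  have "L1\<^sup>2 * \<mu>\<^sup>2 / 2 * (n * (n + 2) * (n + 4)) \<le> X"
  proof -
    have c0: "0 \<le> L1\<^sup>2 * \<mu>\<^sup>2 / 2" by simp
    have "L1\<^sup>2 * \<mu>\<^sup>2 / 2 * (n * (n + 2) * (n + 4)) \<le> L1\<^sup>2 * \<mu>\<^sup>2 / 2 * (n + 6) ^ 3"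
      by (rule mult_left_mono[OF P c0])
    also have "\<dots> = X" unfolding X_def m_def by simp
    finally show ?thesis .
  qed
  moreover have "2 * \<sigma>\<^sup>2 / \<mu>\<^sup>2 * n = Y" unfolding Y_def m_def ..
  moreover have "2 * ((n + 2) * G) \<le> 2 * (n + 4) * G"
  proof -
    have "2 * ((n + 2) * G) = 2 * (n + 4) * G - 4 * G" by (simp add: algebra_simps)
    then show ?thesis using G by linarith
  qed
  ultimately show ?thesis using XYb unfolding K_def by linarith
qed


lemma pointwise_bound:
  fixes D t s \<mu> L \<sigma> :: real
  assumes mu: "\<mu> > 0" and s: "s \<ge> 0" and r: "\<bar>D - \<mu> * t\<bar> \<le> L * \<mu>\<^sup>2 * s / 2" 
  shows "s / \<mu>\<^sup>2 * (D\<^sup>2 + 2 * \<sigma>\<^sup>2) \<le> 2 * (t\<^sup>2 * s) + L\<^sup>2 * \<mu>\<^sup>2 / 2 * s ^ 3 + 2 * \<sigma>\<^sup>2 / \<mu>\<^sup>2 * s"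
proof -
  define r where "r = D - \<mu> * t"
  have D: "D = \<mu> * t + r" unfolding r_def by simp
  have r2: "r\<^sup>2 \<le> (L * \<mu>\<^sup>2 * s / 2)\<^sup>2"
    using r unfolding r_def by (metis abs_ge_zero abs_le_square_iff order_trans power2_abs abs_of_nonneg)
  have "D\<^sup>2 \<le> 2 * (\<mu> * t)\<^sup>2 + 2 * r\<^sup>2"
    unfolding D using sum_squares_ge_zero[of "\<mu> * t - r" 0] by (simp add: power2_eq_square algebra_simps)
  also have "\<dots> \<le> 2 * (\<mu> * t)\<^sup>2 + 2 * (L * \<mu>\<^sup>2 * s / 2)\<^sup>2" using r2 by simp
  finally have D2: "D\<^sup>2 \<le> 2 * (\<mu> * t)\<^sup>2 + 2 * (L * \<mu>\<^sup>2 * s / 2)\<^sup>2" .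
  have "s / \<mu>\<^sup>2 * D\<^sup>2 \<le> s / \<mu>\<^sup>2 * (2 * (\<mu> * t)\<^sup>2 + 2 * (L * \<mu>\<^sup>2 * s / 2)\<^sup>2)"
    using s mu D2 by (intro mult_left_mono) auto
  also have "\<dots> = 2 * (t\<^sup>2 * s) + L\<^sup>2 * \<mu>\<^sup>2 / 2 * s ^ 3"
    using mu by (simp add: field_simps power2_eq_square power3_eq_cube)
  finally have A: "s / \<mu>\<^sup>2 * D\<^sup>2 \<le> 2 * (t\<^sup>2 * s) + L\<^sup>2 * \<mu>\<^sup>2 / 2 * s ^ 3" .
  have "s / \<mu>\<^sup>2 * (D\<^sup>2 + 2 * \<sigma>\<^sup>2) = s / \<mu>\<^sup>2 * D\<^sup>2 + 2 * \<sigma>\<^sup>2 / \<mu>\<^sup>2 * s"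
    by (simp add: algebra_simps)
  then show ?thesis using A by linarith
qed

theorem lemma2:
  fixes f :: "real ^ 'n \<Rightarrow> real"
    and grad :: "real ^ 'n \<Rightarrow> real ^ 'n"
    and L1 \<sigma> :: real
    and N :: "real measure"
    and x :: "real ^ 'n"
  assumes convex: "convex_on UNIV f"
    and grad: "\<And>y. GDERIV f y :> grad y"
    and grad_cont: "continuous_on UNIV grad"
    and lipschitz: "\<And>y z. norm (grad y - grad z) \<le> L1 * norm (y - z)"
    and L1_pos: "L1 > 0"
    and noise_prob: "prob_space N"
    and noise_sets: "sets N = sets borel"
    and noise_sq_int: "integrable N (\<lambda>e. e\<^sup>2)"
    and noise_mean: "(\<integral>e. e \<partial>N) = 0"
    and noise_var: "(\<integral>e. e\<^sup>2 \<partial>N) = \<sigma>\<^sup>2"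
    and sigma_pos: "\<sigma> > 0"
  shows "(\<integral>\<^sup>+ (u, e1, e2). ennreal ((norm (stars_step f (mu_star L1 \<sigma> CARD('n)) x u e1 e2))\<^sup>2)
            \<partial>(std_gaussian \<Otimes>\<^sub>M (N \<Otimes>\<^sub>M N)))
         \<le> ennreal (2 * (real CARD('n) + 4) * (norm (grad x))\<^sup>2
              + 2 * sqrt 2 * L1 * \<sigma> * sqrt (real CARD('n) * (real CARD('n) + 6) ^ 3))"
proof -
  define n where "n = real CARD('n)"
  define \<mu> where "\<mu> = mu_star L1 \<sigma> CARD('n)"
  define g where "g = grad x"
  have c1: "CARD('n) \<ge> 1" using card_gt_0_iff[of "UNIV::'n set"] by simp
  have n1: "n \<ge> 1" unfolding n_def using c1 by simp
  have mu_pos: "\<mu> > 0"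
    unfolding \<mu>_def mu_star_def using n1 L1_pos sigma_pos unfolding n_def
    by (intro powr_gt_zero[THEN iffD2]) (auto intro!: divide_pos_pos mult_pos_pos)
  have fcont: "continuous_on UNIV f"
    using grad unfolding gderiv_def
    by (intro continuous_at_imp_continuous_on ballI has_derivative_continuous) auto
  have [measurable]: "f \<in> borel_measurable borel" by (rule borel_measurable_continuous_onI[OF fcont])
  interpret NN: prob_space "N \<Otimes>\<^sub>M N" by (intro prob_space_pair noise_prob)
  have setsG: "sets (std_gaussian :: (real^'n) measure) = sets borel" unfolding std_gaussian_def by simp
  define D where "D = (\<lambda>u. f (x + \<mu> *\<^sub>R u) - f x)"
  have nrm: "(norm (stars_step f \<mu> x u e1 e2))\<^sup>2 = (norm u)\<^sup>2 / \<mu>\<^sup>2 * (D u + e2 - e1)\<^sup>2" for u e1 e2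
    unfolding stars_step_def D_def using mu_pos
    by (simp add: power_mult_distrib power_divide field_simps)
  have meas: "(\<lambda>(u, e1, e2). ennreal ((norm (stars_step f \<mu> x u e1 e2))\<^sup>2)) \<in> borel_measurable (std_gaussian \<Otimes>\<^sub>M (N \<Otimes>\<^sub>M N))"
    unfolding stars_step_def
    by (subst measurable_cong_sets[OF sets_pair_measure_cong[OF setsG sets_pair_measure_cong[OF noise_sets noise_sets]] refl]) measurable
  have "(\<integral>\<^sup>+ (u, e1, e2). ennreal ((norm (stars_step f \<mu> x u e1 e2))\<^sup>2) \<partial>(std_gaussian \<Otimes>\<^sub>M (N \<Otimes>\<^sub>M N)))
      = (\<integral>\<^sup>+ u. \<integral>\<^sup>+ (e1, e2). ennreal ((norm (stars_step f \<mu> x u e1 e2))\<^sup>2) \<partial>(N \<Otimes>\<^sub>M N) \<partial>std_gaussian)"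
    by (subst NN.nn_integral_fst[symmetric, OF meas]) (simp add: split_beta')
  also have "\<dots> = (\<integral>\<^sup>+ u. ennreal ((norm u)\<^sup>2 / \<mu>\<^sup>2 * ((D u)\<^sup>2 + 2 * \<sigma>\<^sup>2)) \<partial>std_gaussian)"
  proof (rule nn_integral_cong)
    fix u :: "real^'n"
    show "(\<integral>\<^sup>+ (e1, e2). ennreal ((norm (stars_step f \<mu> x u e1 e2))\<^sup>2) \<partial>(N \<Otimes>\<^sub>M N))
        = ennreal ((norm u)\<^sup>2 / \<mu>\<^sup>2 * ((D u)\<^sup>2 + 2 * \<sigma>\<^sup>2))"
      unfolding nrm
      by (rule noise_pair[OF noise_prob noise_sets noise_sq_int noise_mean noise_var]) simp
  qed
  also have "\<dots> \<le> (\<integral>\<^sup>+ u. ennreal (2 * ((g \<bullet> u)\<^sup>2 * (norm u)\<^sup>2) + L1\<^sup>2 * \<mu>\<^sup>2 / 2 * (norm u) ^ 6 + 2 * \<sigma>\<^sup>2 / \<mu>\<^sup>2 * (norm u)\<^sup>2) \<partial>std_gaussian)"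
  proof (intro nn_integral_mono ennreal_leI)
    fix u :: "real^'n"
    have tb: "\<bar>D u - \<mu> * (g \<bullet> u)\<bar> \<le> L1 * \<mu>\<^sup>2 * (norm u)\<^sup>2 / 2"
      using taylor_bound[OF grad lipschitz, of x "\<mu> *\<^sub>R u"] mu_pos
      by (simp add: D_def g_def power_mult_distrib inner_commute)
    have "(norm u) ^ 6 = ((norm u)\<^sup>2) ^ 3" by (simp flip: power_mult)
    then show "(norm u)\<^sup>2 / \<mu>\<^sup>2 * ((D u)\<^sup>2 + 2 * \<sigma>\<^sup>2) \<le> 2 * ((g \<bullet> u)\<^sup>2 * (norm u)\<^sup>2) + L1\<^sup>2 * \<mu>\<^sup>2 / 2 * (norm u) ^ 6 + 2 * \<sigma>\<^sup>2 / \<mu>\<^sup>2 * (norm u)\<^sup>2"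
      using pointwise_bound[OF mu_pos _ tb, of \<sigma>] by simp
  qed
  also have "\<dots> = ennreal (\<integral>u. 2 * ((g \<bullet> u)\<^sup>2 * (norm u)\<^sup>2) + L1\<^sup>2 * \<mu>\<^sup>2 / 2 * (norm u) ^ 6 + 2 * \<sigma>\<^sup>2 / \<mu>\<^sup>2 * (norm u)\<^sup>2 \<partial>std_gaussian)"
  proof (rule nn_integral_eq_integral)
    show "integrable std_gaussian (\<lambda>u. 2 * ((g \<bullet> u)\<^sup>2 * (norm u)\<^sup>2) + L1\<^sup>2 * \<mu>\<^sup>2 / 2 * (norm u) ^ 6 + 2 * \<sigma>\<^sup>2 / \<mu>\<^sup>2 * (norm u)\<^sup>2)"
      by (intro Bochner_Integration.integrable_add Bochner_Integration.integrable_mult_right gauss_grad(1) gauss_norm6(1) gauss_norm2(1))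
  qed auto
  also have "\<dots> = ennreal (2 * ((n + 2) * (norm g)\<^sup>2) + L1\<^sup>2 * \<mu>\<^sup>2 / 2 * (n * (n + 2) * (n + 4)) + 2 * \<sigma>\<^sup>2 / \<mu>\<^sup>2 * n)"
    using gauss_grad[of g] gauss_norm6[where 'n='n] gauss_norm2[where 'n='n] by (simp add: n_def del: ennreal_plus)
  also have "\<dots> \<le> ennreal (2 * (n + 4) * (norm g)\<^sup>2 + 2 * sqrt 2 * L1 * \<sigma> * sqrt (n * (n + 6) ^ 3))"
    by (intro ennreal_leI final_arith[OF n1 L1_pos sigma_pos]) (auto simp: \<mu>_def mu_star_def n_def)
  finally show ?thesis unfolding \<mu>_def n_def g_def .
qed

end
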